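(* In any run of multi-agent dual policy iteration (defined in the context), let $\pi_h$ and $\pi$ denote the joint safety policy and the joint task policy at the end of an outer iteration. Then $$\{x\in\mathcal X: V_h^{\pi}(x)\ge0\}=\{x\in\mathcal X: V_h^{\pi_h}(x)\ge0\}=S_{\rm c}^{\rm new}.$$ These sets are non-decreasing with respect to inclusion across outer iterations. If the joint safety policies converge to $\pi_h^*$ (e.g. under the tie-breaking convention, in which case they are eventually constant), these sets eventually equal $S_{\rm c}^*:=\{x: V_h^{\pi_h^*}(x)\ge0\}$.
   Context: Setting. Let $\mathcal N=\{1,\dots,n\}$ be a finite set of agents, $\mathcal X$ a finite state space, $\mathcal U_i$ a finite action set for agent $i$, $\mathcal U=\prod_{i=1}^n\mathcal U_i$ the joint action space, $f:\mathcal X\times\mathcal U\to\mathcal X$ the deterministic dynamics, $r:\mathcal X\times\mathcal U\to\mathbb R$ a reward, $h:\mathcal X\to\mathbb R$ a constraint function, and $\gamma,\gamma_h\in(0,1)$ discount factors. An individual policy of agent $i$ is a map $\pi_i:\mathcal X\to\mathcal U_i$. A joint policy is $\pi=(\pi_1,\dots,\pi_n)$, with $\pi(x)=(\pi_1(x),\dots,\pi_n(x))$. For a joint action $u$ and an agent $i$, $(u_i',u_{-i})$ denotes $u$ with its $i$-th component replaced by $u_i'$. Safety value function. For a joint policy $\pi$, set $V_h^{\pi}(x)=\min_{t\in\mathbb N}\gamma_h^{t+1}h(x_t)$, where $x_0=x$ and $x_{t+1}=f(x_t,\pi(x_t))$. Value function. Along the same trajectory, set $V^{\pi}(x)=\sum_{t\ge0}\gamma^t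 r(x_t,\pi(x_t))$. Controlled invariant set. $S_{\rm c}^{\pi}=\{x: V_h^{\pi}(x)\ge0\}$. Invariant action set. For a joint policy $\pi_h$, a state $x$, and actions $u_{-i}$ of the agents other than $i$, set $\mathcal U_i^{\pi_h}(x,u_{-i})=\{u_i\in\mathcal U_i: V_h^{\pi_h}(f(x,(u_i,u_{-i})))\ge0\}$. Safety update step. Given the current joint safety policy $\pi_h$ and an ordering $i_1,\dots,i_n$ of $\mathcal N$: for each $x$ and $j=1,\dots,n$ in turn, replace $\pi_{h,i_j}(x)$ by an element of $\arg\max_{v\in\mathcal U_{i_j}}V_h^{\pi_h^{\rm old}}(f(x,w))$. Here $V_h^{\pi_h^{\rm old}}$ is computed for the policy before this step, and $w$ has component $i_j$ equal to $v$, components of earlier agents equal to their already-updated actions, and components of later agents equal to their old actions. Multi-agent dual policy iteration. Start from an initial joint safety policy $\pi_h$, an arbitrary initial joint task policy $\pi$, and $S_{\rm c}=\varnothing$. Each outer iteration consists of: (1) apply the safety update step $K\ge1$ times to $\pi_h$; (2) compute $V^{\pi}$ for the current task policy $\pi$; (3) for every $x\in\mathcal X\setminus S_{\rm c}$, set $\pi(x)\leftarrow\pi_h(x)$; (4) set $S_{\rm c}^{\rm new}=S_{\rm c}^{\pi_h}$; (5) choose an ordering $i_1,\dots,i_n$. For each $x\in S_{\rm c}^{\rm new}$ and $j=1,\dots,n$ in turn, set $$\pi^{\rm new}_{i_j}(x)\in\arg\max_{v\in\mathcal U_{i_j}^{\pi_h}(x,w^{(j)}_{-i_j})}\Big\{r\big(x,(v,w^{(j)}_{-i_j})\big)+\gamma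 V^{\pi}\big(f(x,(v,w^{(j)}_{-i_j}))\big)\Big\},$$ where $w^{(j)}_{-i_j}$ gives agents $i_l$ with $l<j$ their new actions $\pi^{\rm new}_{i_l}(x)$ and agents $i_l$ with $l>j$ their actions under $\pi$ after step (3). For $x\notin S_{\rm c}^{\rm new}$, $\pi^{\rm new}(x)$ is $\pi(x)$ after step (3). Then set $\pi\leftarrow\pi^{\rm new}$; (6) set $S_{\rm c}\leftarrow S_{\rm c}^{\rm new}$. Tie-breaking convention. In every argmax, if the agent's current action is a maximizer, it is selected. Otherwise, a maximizer is selected by a fixed deterministic rule. *)

theory Defs
  imports Complex_Main
begin

text \<open>Agents: elements of a finite type 'i. Actions: a type 'a, agent i restricted
  to the finite set U i. A joint action is a function 'i \<Rightarrow> 'a; a joint policy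
  is a map 'x \<Rightarrow> 'i \<Rightarrow> 'a. States: finite type 'x.\<close>

definition traj :: "('x \<Rightarrow> ('i \<Rightarrow> 'a) \<Rightarrow> 'x) \<Rightarrow> ('x \<Rightarrow> 'i \<Rightarrow> 'a) \<Rightarrow> 'x \<Rightarrow> nat \<Rightarrow> 'x" where
  "traj f p x t = ((\<lambda>y. f y (p y)) ^^ t) x"

text \<open>Safety value: infimum over t of gamma_h^(t+1) h(x_t) (the minimum in the paper;
  the infimum coincides with it whenever it is attained).\<close>
definition safety_value ::
  "real \<Rightarrow> ('x \<Rightarrow> real) \<Rightarrow> ('x \<Rightarrow> ('i \<Rightarrow> 'a) \<Rightarrow> 'x) \<Rightarrow> ('x \<Rightarrow> 'i \<Rightarrow> 'a) \<Rightarrow> 'x \<Rightarrow> real" where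
  "safety_value \<gamma>h h f p x = (INF t. \<gamma>h ^ Suc t * h (traj f p x t))"

definition task_value ::
  "real \<Rightarrow> ('x \<Rightarrow> ('i \<Rightarrow> 'a) \<Rightarrow> real) \<Rightarrow> ('x \<Rightarrow> ('i \<Rightarrow> 'a) \<Rightarrow> 'x) \<Rightarrow> ('x \<Rightarrow> 'i \<Rightarrow> 'a) \<Rightarrow> 'x \<Rightarrow> real" where
  "task_value \<gamma> r f p x = (\<Sum>t. \<gamma> ^ t * r (traj f p x t) (p (traj f p x t)))"

definition is_ordering :: "'i list \<Rightarrow> bool" where
  "is_ordering os \<longleftrightarrow> distinct os \<and> set os = UNIV"

fun greedy_chain ::
  "(('i \<Rightarrow> 'a) \<Rightarrow> 'i \<Rightarrow> 'a set) \<Rightarrow> (('i \<Rightarrow> 'a) \<Rightarrow> real) \<Rightarrow> 'i list \<Rightarrow> ('i \<Rightarrow> 'a) \<Rightarrow> ('i \<Rightarrow> 'a) \<Rightarrow> bool" where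
  "greedy_chain A g [] w w' \<longleftrightarrow> w' = w"
| "greedy_chain A g (i # is) w w' \<longleftrightarrow>
     (\<exists>v \<in> A w i. (\<forall>v' \<in> A w i. g (w(i := v')) \<le> g (w(i := v)))
                \<and> greedy_chain A g is (w(i := v)) w')"

definition safety_update ::
  "('i \<Rightarrow> 'a set) \<Rightarrow> ('x \<Rightarrow> ('i \<Rightarrow> 'a) \<Rightarrow> 'x) \<Rightarrow> ('x \<Rightarrow> real) \<Rightarrow> real
   \<Rightarrow> ('x \<Rightarrow> 'i \<Rightarrow> 'a) \<Rightarrow> ('x \<Rightarrow> 'i \<Rightarrow> 'a) \<Rightarrow> bool" where
  "safety_update U f h \<gamma>h p p' \<longleftrightarrow>
     (\<exists>os. is_ordering os \<and>
        (\<forall>x. greedy_chain (\<lambda>w i. U i) (\<lambda>u. safety_value \<gamma>h h f p (f x u)) os (p x) (p' x)))"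

definition invariant_actions ::
  "('i \<Rightarrow> 'a set) \<Rightarrow> ('x \<Rightarrow> ('i \<Rightarrow> 'a) \<Rightarrow> 'x) \<Rightarrow> ('x \<Rightarrow> real) \<Rightarrow> real
   \<Rightarrow> ('x \<Rightarrow> 'i \<Rightarrow> 'a) \<Rightarrow> 'x \<Rightarrow> ('i \<Rightarrow> 'a) \<Rightarrow> 'i \<Rightarrow> 'a set" where
  "invariant_actions U f h \<gamma>h ph x w i =
     {v \<in> U i. safety_value \<gamma>h h f ph (f x (w(i := v))) \<ge> 0}"

definition outer_iter ::
  "('i \<Rightarrow> 'a set) \<Rightarrow> ('x \<Rightarrow> ('i \<Rightarrow> 'a) \<Rightarrow> 'x) \<Rightarrow> ('x \<Rightarrow> ('i \<Rightarrow> 'a) \<Rightarrow> real) \<Rightarrow> ('x \<Rightarrow> real)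
   \<Rightarrow> real \<Rightarrow> real \<Rightarrow> nat
   \<Rightarrow> ('x \<Rightarrow> 'i \<Rightarrow> 'a) \<Rightarrow> ('x \<Rightarrow> 'i \<Rightarrow> 'a) \<Rightarrow> 'x set
   \<Rightarrow> ('x \<Rightarrow> 'i \<Rightarrow> 'a) \<Rightarrow> ('x \<Rightarrow> 'i \<Rightarrow> 'a) \<Rightarrow> 'x set \<Rightarrow> bool" where
  "outer_iter U f r h \<gamma> \<gamma>h K ph p S ph' p' S' \<longleftrightarrow>
     \<comment> \<open>(1) K safety update steps\<close>
     (\<exists>q. q 0 = ph \<and> q K = ph' \<and> (\<forall>m<K. safety_update U f h \<gamma>h (q m) (q (Suc m)))) \<and>
     (let Vt = task_value \<gamma> r f p;                                  \<comment> \<open>(2)\<close>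
          p3 = (\<lambda>x. if x \<in> S then p x else ph' x);                    \<comment> \<open>(3)\<close>
          Snew = {x. safety_value \<gamma>h h f ph' x \<ge> 0}                  \<comment> \<open>(4)\<close>
      in (\<exists>os. is_ordering os \<and>                                      \<comment> \<open>(5)\<close>
            (\<forall>x. if x \<in> Snew
                 then greedy_chain (invariant_actions U f h \<gamma>h ph' x)
                        (\<lambda>u. r x u + \<gamma> * Vt (f x u)) os (p3 x) (p' x)
                 else p' x = p3 x))
         \<and> S' = Snew)                                                  \<comment> \<open>(6)\<close>"

text \<open>A run: ph k, p k, S k are the safety policy, task policy and set S_c after k
  outer iterations (k = 0: initial values).\<close>
definition madpi_run ::
  "('i \<Rightarrow> 'a set) \<Rightarrow> ('x \<Rightarrow> ('i \<Rightarrow> 'a) \<Rightarrow> 'x) \<Rightarrow> ('x \<Rightarrow> ('i \<Rightarrow> 'a) \<Rightarrow> real) \<Rightarrow> ('x \<Rightarrow> real)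
   \<Rightarrow> real \<Rightarrow> real \<Rightarrow> nat
   \<Rightarrow> (nat \<Rightarrow> 'x \<Rightarrow> 'i \<Rightarrow> 'a) \<Rightarrow> (nat \<Rightarrow> 'x \<Rightarrow> 'i \<Rightarrow> 'a) \<Rightarrow> (nat \<Rightarrow> 'x set) \<Rightarrow> bool" where
  "madpi_run U f r h \<gamma> \<gamma>h K ph p S \<longleftrightarrow>
     S 0 = {} \<and>
     (\<forall>k. outer_iter U f r h \<gamma> \<gamma>h K (ph k) (p k) (S k) (ph (Suc k)) (p (Suc k)) (S (Suc k)))"

end

theory Submission
  imports Defs
begin

lemma traj_0[simp]: "traj f p x 0 = x"
  by (simp add: traj_def)

lemma traj_Suc: "traj f p x (Suc t) = f (traj f p x t) (p (traj f p x t))"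
  by (simp add: traj_def)

lemma traj_Suc': "traj f p x (Suc t) = traj f p (f x (p x)) t"
  by (simp add: traj_def funpow_Suc_right del: funpow.simps)

lemma sv_nonneg_iff:
  fixes h :: "'x::finite \<Rightarrow> real"
  assumes g0: "0 < \<gamma>h" and g1: "\<gamma>h < 1"
  shows "(0 \<le> safety_value \<gamma>h h f p x) \<longleftrightarrow> (\<forall>t. 0 \<le> h (traj f p x t))"
proof -
  define M where "M = Max (range (\<lambda>y. \<bar>h y\<bar>))"
  have hM: "\<bar>h y\<bar> \<le> M" for y unfolding M_def by (rule Max_ge) auto
  have M0: "0 \<le> M" using hM[of undefined] by linarith
  have bdd: "bdd_below (range (\<lambda>t. \<gamma>h ^ Suc t * h (traj f p x t)))"
  proof (rule bdd_belowI[of _ "-M"])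
    fix z assume "z \<in> range (\<lambda>t. \<gamma>h ^ Suc t * h (traj f p x t))"
    then obtain t where z: "z = \<gamma>h ^ Suc t * h (traj f p x t)" by auto
    have p0: "0 < \<gamma>h ^ Suc t" using g0 by simp
    have p1: "\<gamma>h ^ Suc t \<le> 1" using g0 g1 power_le_one[of \<gamma>h "Suc t"] by simp
    have "\<gamma>h ^ Suc t * (-M) \<le> \<gamma>h ^ Suc t * h (traj f p x t)"
      using hM[of "traj f p x t"] p0 by (intro mult_left_mono) auto
    moreover have "\<gamma>h ^ Suc t * M \<le> 1 * M" using p1 M0 by (rule mult_right_mono)
    ultimately show "-M \<le> z" using z by simp
  qed
  show ?thesis
  proof
    assume H: "0 \<le> safety_value \<gamma>h h f p x"
    show "\<forall>t. 0 \<le> h (traj f p x t)"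
    proof
      fix t
      have "safety_value \<gamma>h h f p x \<le> \<gamma>h ^ Suc t * h (traj f p x t)"
        unfolding safety_value_def by (rule cINF_lower[OF bdd]) simp
      with H have "0 \<le> \<gamma>h ^ Suc t * h (traj f p x t)" by linarith
      moreover have "0 < \<gamma>h ^ Suc t" using g0 by simp
      ultimately show "0 \<le> h (traj f p x t)" by (simp add: zero_le_mult_iff)
    qed
  next
    assume H: "\<forall>t. 0 \<le> h (traj f p x t)"
    show "0 \<le> safety_value \<gamma>h h f p x"
      unfolding safety_value_def
    proof (rule cINF_greatest)
      fix t show "0 \<le> \<gamma>h ^ Suc t * h (traj f p x t)" using H g0 by simp
    qed simp
  qed
qed

lemma safe_step:
  fixes h :: "'x::finite \<Rightarrow> real"
  assumes "0 < \<gamma>h" "\<gamma>h < 1"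
  shows "(0 \<le> safety_value \<gamma>h h f p x) \<longleftrightarrow>
         0 \<le> h x \<and> 0 \<le> safety_value \<gamma>h h f p (f x (p x))"
proof -
  have "(\<forall>t. 0 \<le> h (traj f p x t)) \<longleftrightarrow> 0 \<le> h x \<and> (\<forall>t. 0 \<le> h (traj f p (f x (p x)) t))"
    by (metis traj_0 traj_Suc' not0_implies_Suc)
  thus ?thesis using sv_nonneg_iff[OF assms, of h f p x] sv_nonneg_iff[OF assms, of h f p "f x (p x)"] by simp
qed

lemma invariant_safe:
  fixes h :: "'x::finite \<Rightarrow> real"
  assumes "0 < \<gamma>h" "\<gamma>h < 1"
    and inv: "\<And>y. y \<in> A \<Longrightarrow> 0 \<le> h y \<and> f y (p y) \<in> A"
    and x: "x \<in> A"
  shows "0 \<le> safety_value \<gamma>h h f p x"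
proof -
  have "traj f p x t \<in> A" for t
    by (induction t) (use x inv in \<open>auto simp: traj_Suc\<close>)
  thus ?thesis using sv_nonneg_iff[OF assms(1,2)] inv by blast
qed

lemma chain_U:
  "greedy_chain (\<lambda>w i. U i) g os w w' \<Longrightarrow> (\<forall>i. w i \<in> U i) \<Longrightarrow>
   g w \<le> g w' \<and> (\<forall>i. w' i \<in> U i)"
proof (induction os arbitrary: w)
  case Nil thus ?case by simp
next
  case (Cons i js)
  then obtain v where v: "v \<in> U i" "\<forall>v'\<in>U i. g (w(i := v')) \<le> g (w(i := v))"
    and c: "greedy_chain (\<lambda>w i. U i) g js (w(i := v)) w'" by auto
  have "g w \<le> g (w(i := v))" using v(2) Cons.prems by (metis fun_upd_triv)
  moreover have "\<forall>j. (w(i := v)) j \<in> U j" using v(1) Cons.prems by simp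
  ultimately show ?case using Cons.IH[OF c] by (meson order_trans)
qed

lemma chain_last:
  "greedy_chain A g os w w' \<Longrightarrow> os \<noteq> [] \<Longrightarrow> \<exists>w0 i v. v \<in> A w0 i \<and> w' = w0(i := v)"
proof (induction os arbitrary: w)
  case Nil thus ?case by simp
next
  case (Cons i js)
  then obtain v where v: "v \<in> A w i"
    and c: "greedy_chain A g js (w(i := v)) w'" by auto
  show ?case
  proof (cases "js = []")
    case True thus ?thesis using v c by auto
  next
    case False thus ?thesis using Cons.IH[OF c] by blast
  qed
qed

lemma update_mono:
  fixes h :: "'x::finite \<Rightarrow> real"
  assumes g: "0 < \<gamma>h" "\<gamma>h < 1"
    and upd: "safety_update U f h \<gamma>h p p'" and pU: "\<forall>x i. p x i \<in> U i"
  shows "(\<forall>x i. p' x i \<in> U i) \<and>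
    {x. 0 \<le> safety_value \<gamma>h h f p x} \<subseteq> {x. 0 \<le> safety_value \<gamma>h h f p' x}"
proof -
  obtain os where ch: "\<And>x. greedy_chain (\<lambda>w i. U i) (\<lambda>u. safety_value \<gamma>h h f p (f x u)) os (p x) (p' x)"
    using upd unfolding safety_update_def by blast
  have C: "safety_value \<gamma>h h f p (f x (p x)) \<le> safety_value \<gamma>h h f p (f x (p' x)) \<and> (\<forall>i. p' x i \<in> U i)" for x
    using chain_U[OF ch[of x]] pU by blast
  let ?A = "{x. 0 \<le> safety_value \<gamma>h h f p x}"
  have "x \<in> ?A \<Longrightarrow> 0 \<le> safety_value \<gamma>h h f p' x" for x
  proof (rule invariant_safe[OF g, where A = ?A])
    fix y assume "y \<in> ?A"
    hence "0 \<le> h y \<and> 0 \<le> safety_value \<gamma>h h f p (f y (p y))" using safe_step[OF g] by auto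
    thus "0 \<le> h y \<and> f y (p' y) \<in> ?A" using C[of y] by auto
  qed
  thus ?thesis using C by auto
qed

lemma updates_mono:
  fixes h :: "'x::finite \<Rightarrow> real"
  assumes g: "0 < \<gamma>h" "\<gamma>h < 1"
    and upd: "\<forall>m<K. safety_update U f h \<gamma>h (q m) (q (Suc m))" and pU: "\<forall>x i. q 0 x i \<in> U i"
  shows "m \<le> K \<Longrightarrow> (\<forall>x i. q m x i \<in> U i) \<and>
    {x. 0 \<le> safety_value \<gamma>h h f (q 0) x} \<subseteq> {x. 0 \<le> safety_value \<gamma>h h f (q m) x}"
proof (induction m)
  case 0 thus ?case using pU by simp
next
  case (Suc m)
  hence IH: "(\<forall>x i. q m x i \<in> U i) \<and>
    {x. 0 \<le> safety_value \<gamma>h h f (q 0) x} \<subseteq> {x. 0 \<le> safety_value \<gamma>h h f (q m) x}" by simp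
  have "safety_update U f h \<gamma>h (q m) (q (Suc m))" using upd Suc.prems by simp
  from update_mono[OF g this] IH show ?case by blast
qed

theorem proposition3:
  fixes U :: "'i::finite \<Rightarrow> 'a set"
    and f :: "'x::finite \<Rightarrow> ('i \<Rightarrow> 'a) \<Rightarrow> 'x"
    and r :: "'x \<Rightarrow> ('i \<Rightarrow> 'a) \<Rightarrow> real"
    and h :: "'x \<Rightarrow> real"
    and \<gamma> \<gamma>h :: real and K :: nat
    and ph p :: "nat \<Rightarrow> 'x \<Rightarrow> 'i \<Rightarrow> 'a" and S :: "nat \<Rightarrow> 'x set"
  assumes "\<And>i. finite (U i)" and "\<And>i. U i \<noteq> {}"
    and "0 < \<gamma>" and "\<gamma> < 1" and "0 < \<gamma>h" and "\<gamma>h < 1"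
    and "K \<ge> 1"
    and "\<And>x i. ph 0 x i \<in> U i" and "\<And>x i. p 0 x i \<in> U i"
    and "madpi_run U f r h \<gamma> \<gamma>h K ph p S"
  shows "(\<forall>k. {x. safety_value \<gamma>h h f (p (Suc k)) x \<ge> 0}
               = {x. safety_value \<gamma>h h f (ph (Suc k)) x \<ge> 0}
             \<and> {x. safety_value \<gamma>h h f (ph (Suc k)) x \<ge> 0} = S (Suc k))
       \<and> (\<forall>k. S k \<subseteq> S (Suc k))
       \<and> (\<forall>ph_star. (\<forall>x. \<forall>\<^sub>F k in sequentially. ph k x = ph_star x) \<longrightarrow>
            (\<forall>\<^sub>F k in sequentially.
               {x. safety_value \<gamma>h h f (p k) x \<ge> 0} = {x. safety_value \<gamma>h h f ph_star x \<ge> 0}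
             \<and> {x. safety_value \<gamma>h h f (ph k) x \<ge> 0} = {x. safety_value \<gamma>h h f ph_star x \<ge> 0}
             \<and> S k = {x. safety_value \<gamma>h h f ph_star x \<ge> 0}))"
proof -
  note g = assms(5,6)
  let ?SF = "\<lambda>q. {x. 0 \<le> safety_value \<gamma>h h f q x}"
  have run: "S 0 = {}" "\<And>k. outer_iter U f r h \<gamma> \<gamma>h K (ph k) (p k) (S k) (ph (Suc k)) (p (Suc k)) (S (Suc k))"
    using assms(10) unfolding madpi_run_def by auto
  have SS: "S (Suc k) = ?SF (ph (Suc k))" for k
    using run(2)[of k] unfolding outer_iter_def Let_def by auto
  have step: "(\<forall>x i. ph k x i \<in> U i) \<Longrightarrow> (\<forall>x i. ph (Suc k) x i \<in> U i) \<and> ?SF (ph k) \<subseteq> ?SF (ph (Suc k))" for k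
  proof -
    assume pU: "\<forall>x i. ph k x i \<in> U i"
    obtain q where q: "q 0 = ph k" "q K = ph (Suc k)" "\<forall>m<K. safety_update U f h \<gamma>h (q m) (q (Suc m))"
      using run(2)[of k] unfolding outer_iter_def by blast
    from updates_mono[OF g q(3), of K] pU q(1,2) show ?thesis by simp
  qed
  have phU: "\<forall>x i. ph k x i \<in> U i" for k
    by (induction k) (use assms(8) step in auto)
  have mono: "?SF (ph k) \<subseteq> ?SF (ph (Suc k))" for k using step phU by blast
  have Smono: "S k \<subseteq> S (Suc k)" for k
  proof (cases k)
    case 0 thus ?thesis using run(1) by simp
  next
    case (Suc j) thus ?thesis using SS mono by simp
  qed
  have P1: "?SF (p (Suc k)) = ?SF (ph (Suc k))" for k
  proof -
    let ?Sn = "?SF (ph (Suc k))"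
    obtain os where os: "is_ordering os" and
      ch: "\<And>x. if x \<in> ?Sn
                 then greedy_chain (invariant_actions U f h \<gamma>h (ph (Suc k)) x)
                        (\<lambda>u. r x u + \<gamma> * task_value \<gamma> r f (p k) (f x u)) os
                        ((\<lambda>x. if x \<in> S k then p k x else ph (Suc k) x) x) (p (Suc k) x)
                 else p (Suc k) x = (\<lambda>x. if x \<in> S k then p k x else ph (Suc k) x) x"
      using run(2)[of k] unfolding outer_iter_def Let_def by blast
    have osne: "os \<noteq> []" using os unfolding is_ordering_def by auto
    have Sk: "S k \<subseteq> ?Sn" using Smono[of k] SS[of k] by simp
    have in_Sn: "x \<in> ?Sn \<Longrightarrow> f x (p (Suc k) x) \<in> ?Sn" for x
    proof -
      assume x: "x \<in> ?Sn"
      with ch[of x] have c: "greedy_chain (invariant_actions U f h \<gamma>h (ph (Suc k)) x)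
                        (\<lambda>u. r x u + \<gamma> * task_value \<gamma> r f (p k) (f x u)) os
                        ((\<lambda>x. if x \<in> S k then p k x else ph (Suc k) x) x) (p (Suc k) x)" by simp
      from chain_last[OF c osne] obtain w0 i v where
        "v \<in> invariant_actions U f h \<gamma>h (ph (Suc k)) x w0 i" "p (Suc k) x = w0(i := v)" by blast
      thus ?thesis unfolding invariant_actions_def by simp
    qed
    have out: "x \<notin> ?Sn \<Longrightarrow> p (Suc k) x = ph (Suc k) x" for x
      using ch[of x] Sk by auto
    show ?thesis
    proof
      show "?Sn \<subseteq> ?SF (p (Suc k))"
      proof
        fix x assume x: "x \<in> ?Sn"
        show "x \<in> ?SF (p (Suc k))"
        proof (simp, rule invariant_safe[OF g, where A = ?Sn])
          fix y assume "y \<in> ?Sn"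
          thus "0 \<le> h y \<and> f y (p (Suc k) y) \<in> ?Sn" using in_Sn safe_step[OF g] by blast
        qed (rule x)
      qed
    next
      let ?B = "?Sn \<union> ?SF (p (Suc k))"
      have "x \<in> ?B \<Longrightarrow> 0 \<le> safety_value \<gamma>h h f (ph (Suc k)) x" for x
      proof (rule invariant_safe[OF g, where A = ?B])
        fix y assume y: "y \<in> ?B"
        show "0 \<le> h y \<and> f y (ph (Suc k) y) \<in> ?B"
        proof (cases "y \<in> ?Sn")
          case True thus ?thesis using safe_step[OF g, of h f "ph (Suc k)" y] by auto
        next
          case False
          hence "y \<in> ?SF (p (Suc k))" using y by blast
          thus ?thesis using safe_step[OF g, of h f "p (Suc k)" y] out[OF False] by auto
        qed
      qed
      thus "?SF (p (Suc k)) \<subseteq> ?Sn" by blast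
    qed
  qed
  have P3: "\<forall>ph_star. (\<forall>x. \<forall>\<^sub>F k in sequentially. ph k x = ph_star x) \<longrightarrow>
            (\<forall>\<^sub>F k in sequentially.
               ?SF (p k) = ?SF ph_star \<and> ?SF (ph k) = ?SF ph_star \<and> S k = ?SF ph_star)"
  proof (intro allI impI)
    fix ph_star assume H: "\<forall>x. \<forall>\<^sub>F k in sequentially. ph k x = ph_star x"
    have "\<forall>\<^sub>F k in sequentially. \<forall>x. ph k x = ph_star x"
      using H by (simp add: eventually_all_finite)
    then obtain N where N: "\<And>k. k \<ge> N \<Longrightarrow> ph k = ph_star"
      unfolding eventually_sequentially by blast
    show "\<forall>\<^sub>F k in sequentially.
               ?SF (p k) = ?SF ph_star \<and> ?SF (ph k) = ?SF ph_star \<and> S k = ?SF ph_star"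
      unfolding eventually_sequentially
    proof (intro exI[of _ "Suc N"] allI impI)
      fix k assume k: "Suc N \<le> k"
      then obtain j where j: "k = Suc j" by (cases k) auto
      have "ph k = ph_star" using N k by simp
      thus "?SF (p k) = ?SF ph_star \<and> ?SF (ph k) = ?SF ph_star \<and> S k = ?SF ph_star"
        using P1[of j] SS[of j] j by simp
    qed
  qed
  show ?thesis using P1 SS Smono P3 by auto
qed

end
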